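(* Assume $\tilde R=R$ and $\tilde\Phi>\Phi$ (so $\tilde\rho>\rho$), that $c_A$ is convex and real-valued on $[0,\infty)$, that a maximizer $\tilde h_A$ of $\pi_{\tilde\rho}$ exists, that $\bar{\bar h}_A(h)<\infty$ for all $h\in(0,H)$, that $\bar{\bar h}_A$ is non-decreasing on $(0,H)$, and that $\hat h\in(0,H)$ satisfies $\hat h+\bar{\bar h}_A(\hat h)=H$. Then $0<\hat h<\tfrac12H$ and, if the miner's pre-attack hash power satisfies $h^*_A\in(\hat h,H)$, the incentive compatibility constraint $$\Big(\pi_{\rho}(h^*_A)-\pi_{\tilde\rho}\big(\max\{\tilde h_A,\underline h_A\}\big)\Big)\mathcal L\ \ge\ V_{attack}$$ fails for $V_{attack}=0$; i.e., there is no equilibrium without a majority attack even when the attack yields no private benefit.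
   Context: Proof-of-Work mining model. The aggregate hash power on the blockchain before an attack is $H>0$, the target time between blocks is $\tau>0$, and the difficulty is held fixed at $D=\tau H$, so a miner applying hash power $h$ alone on a chain mines in expectation $h/D$ blocks per unit of time. On the benchmark chain each block yields expected block reward $R\ge0$ and expected transaction fees $\Phi\ge0$; on the attacking chain the values are $\tilde R,\tilde\Phi$. Write $\rho=R+\Phi$, $\tilde\rho=\tilde R+\tilde\Phi$. The miner (potential attacker) $A$ has cost per unit time $c_A(h)$ of hash power $h\ge0$; flow profit at reward level $x$ is $\pi_x(h)=\frac hDx-c_A(h)$. $h^*_A$ is $A$'s pre-attack hash power (treated as a parameter in $(0,H)$); a successful attack requires at least $\underline h_A=\max\{\tfrac12H,H-h^*_A\}$; $\tilde h_A$ maximizes $\pi_{\tilde\rho}$ on $[0,\infty)$; $A$ attacks with $\max\{\tilde h_A,\underline h_A\}$; expected attack duration is $\mathcal L>0$. $V_{attack}\ge0$ is $A$'s private benefit from a successful attack. For $h\in(0,H)$, $\bar{\bar h}_A(h)=\sup\{h'>h:\pi_{\tilde\rho}(h')\ge\pi_\rho(h)\}$. *)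

theory Defs
  imports "HOL-Analysis.Analysis"
begin

definition flow_profit :: "real \<Rightarrow> (real \<Rightarrow> real) \<Rightarrow> real \<Rightarrow> real \<Rightarrow> real" where
  "flow_profit D c x h = h / D * x - c h"

definition hbarbar :: "real \<Rightarrow> (real \<Rightarrow> real) \<Rightarrow> real \<Rightarrow> real \<Rightarrow> real \<Rightarrow> real" where
  "hbarbar D c rho rhot h =
     Sup {h'. h' > h \<and> flow_profit D c rhot h' \<ge> flow_profit D c rho h}"

text \<open>Minimal hash power for a successful attack: max(H/2, H - h*).\<close>
definition h_low :: "real \<Rightarrow> real \<Rightarrow> real" where
  "h_low H hstar = max (H / 2) (H - hstar)"

definition icc :: "real \<Rightarrow> (real \<Rightarrow> real) \<Rightarrow> real \<Rightarrow> real \<Rightarrow> real \<Rightarrow> real \<Rightarrow> real \<Rightarrow> real \<Rightarrow> real \<Rightarrow> bool" where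
  "icc D c rho rhot H hstar ht L V \<longleftrightarrow>
     (flow_profit D c rho hstar - flow_profit D c rhot (max ht (h_low H hstar))) * L \<ge> V"

end

theory Submission
  imports Defs
begin

theorem proposition1:
  fixes H \<tau> R \<Phi> Rt \<Phi>t L hhat hstar ht :: real
    and cA :: "real \<Rightarrow> real"
  defines "D \<equiv> \<tau> * H"
      and "\<rho> \<equiv> R + \<Phi>"
      and "\<rho>t \<equiv> Rt + \<Phi>t"
  assumes H_pos: "H > 0" and tau_pos: "\<tau> > 0"
      and R_nonneg: "R \<ge> 0" and Phi_nonneg: "\<Phi> \<ge> 0"
      and Rt_eq: "Rt = R" and Phit_gt: "\<Phi>t > \<Phi>"
      and L_pos: "L > 0"
      and hstar_range: "0 < hstar" "hstar < H"
      and convex: "convex_on {0..} cA"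
      and ht_max: "ht \<ge> 0" "\<forall>h\<ge>0. flow_profit D cA \<rho>t h \<le> flow_profit D cA \<rho>t ht"
      and hbb_finite: "\<forall>h\<in>{0<..<H}.
            bdd_above {h'. h' > h \<and> flow_profit D cA \<rho>t h' \<ge> flow_profit D cA \<rho> h}"
      and hbb_mono: "mono_on {0<..<H} (hbarbar D cA \<rho> \<rho>t)"
      and hhat_range: "hhat \<in> {0<..<H}"
      and hhat_eq: "hhat + hbarbar D cA \<rho> \<rho>t hhat = H"
  shows "0 < hhat \<and> hhat < H / 2 \<and>
         (hstar \<in> {hhat<..<H} \<longrightarrow> \<not> icc D cA \<rho> \<rho>t H hstar ht L 0)"
proof -
  let ?p = "flow_profit D cA \<rho>"
  let ?pt = "flow_profit D cA \<rho>t"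
  let ?S = "\<lambda>h. {h'. h' > h \<and> ?pt h' \<ge> ?p h}"
  have Dpos: "D > 0" using H_pos tau_pos by (simp add: D_def)
  have rr: "\<rho>t > \<rho>" using Rt_eq Phit_gt by (simp add: \<rho>_def \<rho>t_def)
  have ptgt: "?pt h > ?p h" if "h > 0" for h
  proof -
    have "h / D * \<rho> < h / D * \<rho>t" using rr that Dpos by (simp add: divide_strict_right_mono)
    thus ?thesis by (simp add: flow_profit_def)
  qed
  have cont: "continuous_on {0<..} cA"
    by (rule convex_on_continuous) (auto intro: convex_on_subset[OF convex])
  have ne: "?S h \<noteq> {}" if "h > 0" for h
  proof -
    have ic: "isCont cA h" using continuous_on_interior[OF cont] that by (simp add: interior_open)
    have "isCont ?pt h" unfolding flow_profit_def using ic Dpos by (intro continuous_intros) auto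
    hence "(?pt \<longlongrightarrow> ?pt h) (at_right h)"
      by (simp add: isCont_def filterlim_at_split)
    hence "eventually (\<lambda>x. ?pt x > ?p h) (at_right h)"
      using ptgt[OF that] by (rule order_tendstoD(1))
    hence "eventually (\<lambda>x. ?pt x > ?p h \<and> x > h) (at_right h)"
      using eventually_at_right_less eventually_conj by blast
    then obtain x where "?pt x > ?p h \<and> x > h"
      using eventually_happens trivial_limit_at_right_real by blast
    thus ?thesis by auto
  qed
  have hbbgt: "hbarbar D cA \<rho> \<rho>t h > h" if "h \<in> {0<..<H}" for h
  proof -
    have "h > 0" using that by simp
    then obtain x where "x \<in> ?S h" using ne[of h] by blast
    moreover have "x \<le> Sup (?S h)" using calculation hbb_finite that by (auto intro: cSup_upper)
    ultimately show ?thesis unfolding hbarbar_def by auto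
  qed
  have hh0: "0 < hhat" "hhat < H" using hhat_range by auto
  have hhalf: "hhat < H / 2" using hbbgt[OF hhat_range] hhat_eq by linarith
  have part2: "\<not> icc D cA \<rho> \<rho>t H hstar ht L 0" if hs: "hstar \<in> {hhat<..<H}"
  proof -
    have hsr: "hstar \<in> {0<..<H}" using hs hh0 by auto
    have mono: "hbarbar D cA \<rho> \<rho>t hhat \<le> hbarbar D cA \<rho> \<rho>t hstar"
      using hbb_mono hhat_range hsr hs unfolding mono_on_def by auto
    let ?hl = "h_low H hstar"
    have hllt: "?hl < Sup (?S hstar)"
      using mono hhat_eq hhalf hs unfolding h_low_def hbarbar_def by auto
    then obtain y where y: "y \<in> ?S hstar" "?hl < y"
      using less_cSup_iff[OF ne[of hstar] ] hbb_finite hsr by auto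
    have hl0: "?hl \<ge> 0" using H_pos unfolding h_low_def by auto
    have key: "?pt (max ht ?hl) > ?p hstar"
    proof (cases "?hl \<le> ht")
      case True
      hence "max ht ?hl = ht" by auto
      moreover have "?pt hstar \<le> ?pt ht" using ht_max hsr by auto
      ultimately show ?thesis using ptgt[of hstar] hsr by auto
    next
      case False
      hence mx: "max ht ?hl = ?hl" by auto
      define t where "t = (?hl - ht) / (y - ht)"
      have t01: "0 < t" "t < 1" using False y by (auto simp: t_def)
      have yh: "y - ht \<noteq> 0" using False y by auto
      have "t * (y - ht) = ?hl - ht" using yh by (simp add: t_def)
      hence hleq: "?hl = (1 - t) * ht + t * y" by (simp add: algebra_simps)
      have yp: "y \<ge> 0" using y hsr by auto
      have cv: "cA ?hl \<le> (1 - t) * cA ht + t * cA y"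
        using convex_onD[OF convex, of t ht y] t01 ht_max(1) yp hleq by auto
      have lin: "?hl / D * \<rho>t = (1 - t) * (ht / D * \<rho>t) + t * (y / D * \<rho>t)"
        using Dpos by (subst hleq) (simp add: field_simps)
      have "?pt ?hl \<ge> (1 - t) * ?pt ht + t * ?pt y"
        using cv lin unfolding flow_profit_def by (simp add: algebra_simps)
      moreover have "?pt ht > ?p hstar"
      proof -
        have "?pt hstar \<le> ?pt ht" using ht_max(2) hsr by simp
        thus ?thesis using ptgt[of hstar] hsr by simp
      qed
      moreover have "?pt y \<ge> ?p hstar" using y by auto
      ultimately have "?pt ?hl > (1 - t) * ?p hstar + t * ?p hstar"
        using t01 by (smt (verit) mult_left_mono mult_strict_left_mono)
      thus ?thesis using mx by (simp add: algebra_simps)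
    qed
    thus ?thesis unfolding icc_def using L_pos by (simp add: mult_less_0_iff not_le)
  qed
  show ?thesis using hh0 hhalf part2 by auto
qed

end
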